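(* (Preservation.) For every typing context $\Gamma$, expressions $e, e'$, type $\tau$ and natural number $n$: if $\Gamma \vdash e : \tau$ and $e \Rightarrow^{n} e'$, then $\Gamma \vdash e' : \tau$.
   Context: This concerns the "filtered stepper calculus". Syntax: actions $a ::= \mathsf{skip} \mid \mathsf{step}$; gas $g ::= \mathsf{one} \mid \mathsf{all}$; priorities $l \in \mathbb{N}$. Patterns $p ::= x \mid p(p) \mid \lambda x.p \mid p+p \mid \underline{n} \mid \$e \mid \$v$ (the pattern typing rules also admit $\mathrm{fix}\,x.p$). A filter is a triple $f=(p,a,g)$. Expressions $e ::= x \mid e(e) \mid \lambda x.e \mid \mathrm{fix}\,x.e \mid e+e \mid \underline{n} \mid \mathrm{filter}_f(e) \mid \langle e\rangle^{a,g,l}$ (the last is called a residue), taken up to $\alpha$-equivalence; $\underline{n}$ ranges over numerals. Evaluation contexts $\mathcal{E} ::= \circ \mid \mathcal{E}(e) \mid e(\mathcal{E}) \mid \mathcal{E}+e \mid e+\mathcal{E} \mid \mathrm{filter}_f(\mathcal{E}) \mid \langle \mathcal{E}\rangle^{a,g,l}$, with exactly one hole; $\mathcal{E}[e]$ is the result of plugging $e$ into the hole. The values are exactly $\lambda x.e$ and numerals $\underline{n}$ (fixpoints, filters and residues are never values). Substitution $[v/x]e$ is standard capture-avoiding substitution, which passes through residues unchanged, through filters (substituting also into the filter's pattern), and stops at binders $\lambda x$ and $\mathrm{fix}\,x$ of the same variable. Stripping $|e|$ erases all filter and residue wrappers recursively. Matching $p \triangleright e$ is defined inductively: $\$e \triangleright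 e$ for all $e$; $\$v \triangleright v$ for every value $v$; $\underline{n}\triangleright\underline{n}$; $\lambda x_1.e_1 \triangleright \lambda x_2.e_2$ if $|e_1| \equiv_\alpha |e_2|$; $\mathrm{fix}\,x_1.e_1 \triangleright \mathrm{fix}\,x_2.e_2$ if $|e_1|\equiv_\alpha |e_2|$; $p_1(p_2)\triangleright e_1(e_2)$ if $p_1\triangleright e_1$ and $p_2\triangleright e_2$; $p_1+p_2\triangleright e_1+e_2$ likewise; there are no other rules. Instrumentation $e \to_{p,a,g,l} e'$ is the inductively defined relation: values and variables and $\mathrm{fix}\,x.e$ are left unchanged; $\langle e_0\rangle^{a',g',l'} \to_{p,a,g,l} \langle e\rangle^{a',g',l'}$ if $e_0\to_{p,a,g,l} e$; $\mathrm{filter}_{(p',a',g')}(e_0)\to_{p,a,g,l}\mathrm{filter}_{(p',a',g')}(e')$ if $e_0\to_{p,a,g,l} e$ and $e \to_{p',a',g',l+1} e'$; for $e_1(e_2)$, if $e_1\to_{p,a,g,l} e_1'$ and $e_2\to_{p,a,g,l} e_2'$ then $e_1(e_2)\to_{p,a,g,l}\langle e_1'(e_2')\rangle^{a,g,l}$ when $p\triangleright e_1(e_2)$ and $e_1(e_2)\to_{p,a,g,l} e_1'(e_2')$ when not; identically for $e_1+e_2$. Decomposition $e = \mathcal{E}[e_0]$ (with $e_0$ a redex) is the non-deterministic relation: $\langle v\rangle^{a,g,l}$ and $\mathrm{filter}_f(v)$ with $v$ a value decompose as hole $\circ$ with redex themselves; if $e$ decomposes as $\mathcal{E}$ and $e_0$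 then $\langle e\rangle^{a,g,l}$ decomposes as $\langle\mathcal{E}\rangle^{a,g,l}$ and $e_0$, and $\mathrm{filter}_f(e)$ as $\mathrm{filter}_f(\mathcal{E})$ and $e_0$; $e_1(e_2)$ decomposes as $\mathcal{E}_1(e_2)$ if $e_1$ decomposes as $\mathcal{E}_1$, as $e_1(\mathcal{E}_2)$ if $e_1$ is a value and $e_2$ decomposes as $\mathcal{E}_2$, and as $\circ$ with redex $e_1(e_2)$ if both are values; identically for $e_1+e_2$; $\mathrm{fix}\,x.e$ decomposes as $\circ$ with redex itself. Instruction transitions $e_0 \to e'$: $(\lambda x.e_1)(v)\to [v/x]e_1$ for a value $v$; $\underline{n_1}+\underline{n_2}\to\underline{n_1+n_2}$; $\mathrm{fix}\,x.e\to[\mathrm{fix}\,x.e/x]e$; $\langle v\rangle^{a,g,l}\to v$ and $\mathrm{filter}_f(v)\to v$ for a value $v$. Decay ${\downarrow}\mathcal{E}$ recursively removes every residue with gas $\mathsf{one}$ (replacing $\langle e\rangle^{a,\mathsf{one},l}$ by the decay of $e$), keeps residues with gas $\mathsf{all}$ and filters, applies recursively to all subterms, and maps the hole to the hole. Action selection $(a,l)\vdash\mathcal{E}\Downarrow a'$: $(a,l)\vdash\circ\Downarrow a$; for context nodes of the form application, addition or filter, the judgment passes unchanged into the subcontext containing the hole; $(a_0,l_0)\vdash\langle\mathcal{E}\rangle^{a,g,l}\Downarrow a'$ holds if either $l\le l_0$ and $(a_0,l_0)\vdash\mathcal{E}\Downarrow a'$, or $l>l_0$ and $(a,l)\vdash\mathcal{E}\Downarrow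 a'$. An expression is strippable if it has the form $\mathrm{filter}_f(e)$ or $\langle e\rangle^{a,g,l}$. Filtered stepping $e\Rightarrow^n e'$ is defined inductively: (i) $v\Rightarrow^0 v$ for every value $v$; (ii) if $e\to_{\$e,\mathsf{step},\mathsf{one},0} e_i$, $e_i=\mathcal{E}_0[e_0]$ (decomposition), $e_0\to e_t$, $e_1=({\downarrow}\mathcal{E}_0)[e_t]$, $(\mathsf{step},0)\vdash\mathcal{E}_0\Downarrow\mathsf{step}$ and $e_0$ is not strippable, then $e\Rightarrow^1 e_1$; (iii) with $e_i,\mathcal{E}_0,e_0,e_t,e_1$ as in (ii), if $(\mathsf{step},0)\vdash\mathcal{E}_0\Downarrow\mathsf{skip}$ and $e_1\Rightarrow^n e_2$, then $e\Rightarrow^{n+1}e_2$; (iv) with the same data, if $e_0$ is strippable and $e_1\Rightarrow^n e_2$, then $e\Rightarrow^{n+1}e_2$. Typing: types $\tau ::= \mathbb{N}\mid \tau\to\tau$. $\Gamma\vdash e:\tau$ is given by the usual Curry-style simply-typed rules: variables from $\Gamma$; $\lambda x.e : \tau_x\to\tau_e$ if $\Gamma,x{:}\tau_x\vdash e:\tau_e$; application; numerals have type $\mathbb{N}$; $e_1+e_2:\mathbb{N}$ if both summands have type $\mathbb{N}$; $\mathrm{fix}\,x.e:\tau$ if $\Gamma,x{:}\tau\vdash e:\tau$; $\mathrm{filter}_{(p,a,g)}(e):\tau_e$ if $\Gamma\vdash p:\tau_p$ for some $\tau_p$ and $\Gamma\vdash e:\tau_e$; $\langle e\rangle^{a,g,l}:\tau$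 if $\Gamma\vdash e:\tau$. Pattern typing $\Gamma\vdash p:\tau$: $\$e$ and $\$v$ have every type; variables, $\lambda$, application, numerals, addition and $\mathrm{fix}$ are typed by the analogous rules. *)

theory Defs
  imports Main
begin

datatype act = Skip | Step
datatype gas = GOne | GAll

datatype pat =
    PVar nat
  | PApp pat pat
  | PLam pat
  | PFix pat
  | PPlus pat pat
  | PNum nat
  | PAnyE
  | PAnyV

type_synonym filt = "pat \<times> act \<times> gas"

datatype exp =
    EVar nat
  | EApp exp exp
  | ELam exp
  | EFix exp
  | EPlus exp exp
  | ENum nat
  | EFilter filt exp
  | ERes exp act gas nat

datatype ctx =
    Hole
  | CAppL ctx exp
  | CAppR exp ctx
  | CPlusL ctx exp
  | CPlusR exp ctx
  | CFilter filt ctx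
  | CRes ctx act gas nat

fun plug :: "ctx \<Rightarrow> exp \<Rightarrow> exp" where
  "plug Hole e = e"
| "plug (CAppL E e2) e = EApp (plug E e) e2"
| "plug (CAppR e1 E) e = EApp e1 (plug E e)"
| "plug (CPlusL E e2) e = EPlus (plug E e) e2"
| "plug (CPlusR e1 E) e = EPlus e1 (plug E e)"
| "plug (CFilter f E) e = EFilter f (plug E e)"
| "plug (CRes E a g l) e = ERes (plug E e) a g l"

fun is_val :: "exp \<Rightarrow> bool" where
  "is_val (ELam e) = True"
| "is_val (ENum n) = True"
| "is_val _ = False"

fun strip :: "exp \<Rightarrow> exp" where
  "strip (EVar i) = EVar i"
| "strip (EApp e1 e2) = EApp (strip e1) (strip e2)"
| "strip (ELam e) = ELam (strip e)"
| "strip (EFix e) = EFix (strip e)"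
| "strip (EPlus e1 e2) = EPlus (strip e1) (strip e2)"
| "strip (ENum n) = ENum n"
| "strip (EFilter f e) = strip e"
| "strip (ERes e a g l) = strip e"

fun pat_of :: "exp \<Rightarrow> pat" where
  "pat_of (EVar i) = PVar i"
| "pat_of (EApp e1 e2) = PApp (pat_of e1) (pat_of e2)"
| "pat_of (ELam e) = PLam (pat_of e)"
| "pat_of (EFix e) = PFix (pat_of e)"
| "pat_of (EPlus e1 e2) = PPlus (pat_of e1) (pat_of e2)"
| "pat_of (ENum n) = PNum n"
| "pat_of (EFilter f e) = pat_of e"
| "pat_of (ERes e a g l) = pat_of e"

fun plift :: "nat \<Rightarrow> pat \<Rightarrow> pat" where
  "plift k (PVar i) = (if i < k then PVar i else PVar (Suc i))"
| "plift k (PApp p1 p2) = PApp (plift k p1) (plift k p2)"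
| "plift k (PLam p) = PLam (plift (Suc k) p)"
| "plift k (PFix p) = PFix (plift (Suc k) p)"
| "plift k (PPlus p1 p2) = PPlus (plift k p1) (plift k p2)"
| "plift k (PNum n) = PNum n"
| "plift k PAnyE = PAnyE"
| "plift k PAnyV = PAnyV"

fun lift :: "nat \<Rightarrow> exp \<Rightarrow> exp" where
  "lift k (EVar i) = (if i < k then EVar i else EVar (Suc i))"
| "lift k (EApp e1 e2) = EApp (lift k e1) (lift k e2)"
| "lift k (ELam e) = ELam (lift (Suc k) e)"
| "lift k (EFix e) = EFix (lift (Suc k) e)"
| "lift k (EPlus e1 e2) = EPlus (lift k e1) (lift k e2)"
| "lift k (ENum n) = ENum n"
| "lift k (EFilter (p, a, g) e) = EFilter (plift k p, a, g) (lift k e)"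
| "lift k (ERes e a g l) = ERes (lift k e) a g l"

fun psubst :: "nat \<Rightarrow> exp \<Rightarrow> pat \<Rightarrow> pat" where
  "psubst k v (PVar i) =
     (if i = k then pat_of (strip v) else if k < i then PVar (i - 1) else PVar i)"
| "psubst k v (PApp p1 p2) = PApp (psubst k v p1) (psubst k v p2)"
| "psubst k v (PLam p) = PLam (psubst (Suc k) (lift 0 v) p)"
| "psubst k v (PFix p) = PFix (psubst (Suc k) (lift 0 v) p)"
| "psubst k v (PPlus p1 p2) = PPlus (psubst k v p1) (psubst k v p2)"
| "psubst k v (PNum n) = PNum n"
| "psubst k v PAnyE = PAnyE"
| "psubst k v PAnyV = PAnyV"

fun subst :: "nat \<Rightarrow> exp \<Rightarrow> exp \<Rightarrow> exp" where
  "subst k v (EVar i) = (if i = k then v else if k < i then EVar (i - 1) else EVar i)"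
| "subst k v (EApp e1 e2) = EApp (subst k v e1) (subst k v e2)"
| "subst k v (ELam e) = ELam (subst (Suc k) (lift 0 v) e)"
| "subst k v (EFix e) = EFix (subst (Suc k) (lift 0 v) e)"
| "subst k v (EPlus e1 e2) = EPlus (subst k v e1) (subst k v e2)"
| "subst k v (ENum n) = ENum n"
| "subst k v (EFilter (p, a, g) e) = EFilter (psubst k v p, a, g) (subst k v e)"
| "subst k v (ERes e a g l) = ERes (subst k v e) a g l"

inductive matches :: "pat \<Rightarrow> exp \<Rightarrow> bool" where
  m_any: "matches PAnyE e"
| m_val: "is_val v \<Longrightarrow> matches PAnyV v"
| m_num: "matches (PNum n) (ENum n)"
| m_lam: "p = pat_of (strip e) \<Longrightarrow> matches (PLam p) (ELam e)"
| m_fix: "p = pat_of (strip e) \<Longrightarrow> matches (PFix p) (EFix e)"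
| m_app: "matches p1 e1 \<Longrightarrow> matches p2 e2 \<Longrightarrow> matches (PApp p1 p2) (EApp e1 e2)"
| m_plus: "matches p1 e1 \<Longrightarrow> matches p2 e2 \<Longrightarrow> matches (PPlus p1 p2) (EPlus e1 e2)"

inductive instr :: "pat \<Rightarrow> act \<Rightarrow> gas \<Rightarrow> nat \<Rightarrow> exp \<Rightarrow> exp \<Rightarrow> bool" where
  i_lam: "instr p a g l (ELam e) (ELam e)"
| i_num: "instr p a g l (ENum n) (ENum n)"
| i_var: "instr p a g l (EVar i) (EVar i)"
| i_fix: "instr p a g l (EFix e) (EFix e)"
| i_res: "instr p a g l e0 e \<Longrightarrow> instr p a g l (ERes e0 a' g' l') (ERes e a' g' l')"
| i_filter: "instr p a g l e0 e \<Longrightarrow> instr p' a' g' (Suc l) e e' \<Longrightarrow>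
     instr p a g l (EFilter (p', a', g') e0) (EFilter (p', a', g') e')"
| i_app_m: "instr p a g l e1 e1' \<Longrightarrow> instr p a g l e2 e2' \<Longrightarrow> matches p (EApp e1 e2) \<Longrightarrow>
     instr p a g l (EApp e1 e2) (ERes (EApp e1' e2') a g l)"
| i_app_n: "instr p a g l e1 e1' \<Longrightarrow> instr p a g l e2 e2' \<Longrightarrow> \<not> matches p (EApp e1 e2) \<Longrightarrow>
     instr p a g l (EApp e1 e2) (EApp e1' e2')"
| i_plus_m: "instr p a g l e1 e1' \<Longrightarrow> instr p a g l e2 e2' \<Longrightarrow> matches p (EPlus e1 e2) \<Longrightarrow>
     instr p a g l (EPlus e1 e2) (ERes (EPlus e1' e2') a g l)"
| i_plus_n: "instr p a g l e1 e1' \<Longrightarrow> instr p a g l e2 e2' \<Longrightarrow> \<not> matches p (EPlus e1 e2) \<Longrightarrow>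
     instr p a g l (EPlus e1 e2) (EPlus e1' e2')"

inductive decomp :: "exp \<Rightarrow> ctx \<Rightarrow> exp \<Rightarrow> bool" where
  d_res_val: "is_val v \<Longrightarrow> decomp (ERes v a g l) Hole (ERes v a g l)"
| d_filter_val: "is_val v \<Longrightarrow> decomp (EFilter f v) Hole (EFilter f v)"
| d_res: "decomp e E e0 \<Longrightarrow> decomp (ERes e a g l) (CRes E a g l) e0"
| d_filter: "decomp e E e0 \<Longrightarrow> decomp (EFilter f e) (CFilter f E) e0"
| d_appL: "decomp e1 E e0 \<Longrightarrow> decomp (EApp e1 e2) (CAppL E e2) e0"
| d_appR: "is_val e1 \<Longrightarrow> decomp e2 E e0 \<Longrightarrow> decomp (EApp e1 e2) (CAppR e1 E) e0"
| d_app: "is_val e1 \<Longrightarrow> is_val e2 \<Longrightarrow> decomp (EApp e1 e2) Hole (EApp e1 e2)"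
| d_plusL: "decomp e1 E e0 \<Longrightarrow> decomp (EPlus e1 e2) (CPlusL E e2) e0"
| d_plusR: "is_val e1 \<Longrightarrow> decomp e2 E e0 \<Longrightarrow> decomp (EPlus e1 e2) (CPlusR e1 E) e0"
| d_plus: "is_val e1 \<Longrightarrow> is_val e2 \<Longrightarrow> decomp (EPlus e1 e2) Hole (EPlus e1 e2)"
| d_fix: "decomp (EFix e) Hole (EFix e)"

inductive instruction :: "exp \<Rightarrow> exp \<Rightarrow> bool" where
  t_beta: "is_val v \<Longrightarrow> instruction (EApp (ELam e1) v) (subst 0 v e1)"
| t_plus: "instruction (EPlus (ENum n1) (ENum n2)) (ENum (n1 + n2))"
| t_fix: "instruction (EFix e) (subst 0 (EFix e) e)"
| t_res: "is_val v \<Longrightarrow> instruction (ERes v a g l) v"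
| t_filter: "is_val v \<Longrightarrow> instruction (EFilter f v) v"

fun decay_exp :: "exp \<Rightarrow> exp" where
  "decay_exp (EVar i) = EVar i"
| "decay_exp (EApp e1 e2) = EApp (decay_exp e1) (decay_exp e2)"
| "decay_exp (ELam e) = ELam (decay_exp e)"
| "decay_exp (EFix e) = EFix (decay_exp e)"
| "decay_exp (EPlus e1 e2) = EPlus (decay_exp e1) (decay_exp e2)"
| "decay_exp (ENum n) = ENum n"
| "decay_exp (EFilter f e) = EFilter f (decay_exp e)"
| "decay_exp (ERes e a g l) = (if g = GOne then decay_exp e else ERes (decay_exp e) a g l)"

fun decay :: "ctx \<Rightarrow> ctx" where
  "decay Hole = Hole"
| "decay (CAppL E e) = CAppL (decay E) (decay_exp e)"
| "decay (CAppR e E) = CAppR (decay_exp e) (decay E)"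
| "decay (CPlusL E e) = CPlusL (decay E) (decay_exp e)"
| "decay (CPlusR e E) = CPlusR (decay_exp e) (decay E)"
| "decay (CFilter f E) = CFilter f (decay E)"
| "decay (CRes E a g l) = (if g = GOne then decay E else CRes (decay E) a g l)"

inductive select :: "act \<Rightarrow> nat \<Rightarrow> ctx \<Rightarrow> act \<Rightarrow> bool" where
  s_hole: "select a l Hole a"
| s_appL: "select a l E a' \<Longrightarrow> select a l (CAppL E e) a'"
| s_appR: "select a l E a' \<Longrightarrow> select a l (CAppR e E) a'"
| s_plusL: "select a l E a' \<Longrightarrow> select a l (CPlusL E e) a'"
| s_plusR: "select a l E a' \<Longrightarrow> select a l (CPlusR e E) a'"
| s_filter: "select a l E a' \<Longrightarrow> select a l (CFilter f E) a'"
| s_res_le: "l \<le> l0 \<Longrightarrow> select a0 l0 E a' \<Longrightarrow> select a0 l0 (CRes E a g l) a'"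
| s_res_gt: "l > l0 \<Longrightarrow> select a l E a' \<Longrightarrow> select a0 l0 (CRes E a g l) a'"

fun strippable :: "exp \<Rightarrow> bool" where
  "strippable (EFilter f e) = True"
| "strippable (ERes e a g l) = True"
| "strippable _ = False"

inductive fstep :: "exp \<Rightarrow> nat \<Rightarrow> exp \<Rightarrow> bool" where
  fs_val: "is_val v \<Longrightarrow> fstep v 0 v"
| fs_step: "instr PAnyE Step GOne 0 e ei \<Longrightarrow> decomp ei E0 e0 \<Longrightarrow> instruction e0 et \<Longrightarrow>
     e1 = plug (decay E0) et \<Longrightarrow> select Step 0 E0 Step \<Longrightarrow> \<not> strippable e0 \<Longrightarrow>
     fstep e 1 e1"
| fs_skip: "instr PAnyE Step GOne 0 e ei \<Longrightarrow> decomp ei E0 e0 \<Longrightarrow> instruction e0 et \<Longrightarrow>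
     e1 = plug (decay E0) et \<Longrightarrow> select Step 0 E0 Skip \<Longrightarrow> fstep e1 n e2 \<Longrightarrow>
     fstep e (Suc n) e2"
| fs_strip: "instr PAnyE Step GOne 0 e ei \<Longrightarrow> decomp ei E0 e0 \<Longrightarrow> instruction e0 et \<Longrightarrow>
     e1 = plug (decay E0) et \<Longrightarrow> strippable e0 \<Longrightarrow> fstep e1 n e2 \<Longrightarrow>
     fstep e (Suc n) e2"

datatype ty = TNat | TArr ty ty

inductive ptyping :: "ty list \<Rightarrow> pat \<Rightarrow> ty \<Rightarrow> bool" where
  pt_anye: "ptyping \<Gamma> PAnyE \<tau>"
| pt_anyv: "ptyping \<Gamma> PAnyV \<tau>"
| pt_var: "i < length \<Gamma> \<Longrightarrow> ptyping \<Gamma> (PVar i) (\<Gamma> ! i)"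
| pt_lam: "ptyping (\<tau>x # \<Gamma>) p \<tau>e \<Longrightarrow> ptyping \<Gamma> (PLam p) (TArr \<tau>x \<tau>e)"
| pt_app: "ptyping \<Gamma> p1 (TArr \<tau>1 \<tau>2) \<Longrightarrow> ptyping \<Gamma> p2 \<tau>1 \<Longrightarrow> ptyping \<Gamma> (PApp p1 p2) \<tau>2"
| pt_num: "ptyping \<Gamma> (PNum n) TNat"
| pt_plus: "ptyping \<Gamma> p1 TNat \<Longrightarrow> ptyping \<Gamma> p2 TNat \<Longrightarrow> ptyping \<Gamma> (PPlus p1 p2) TNat"
| pt_fix: "ptyping (\<tau> # \<Gamma>) p \<tau> \<Longrightarrow> ptyping \<Gamma> (PFix p) \<tau>"

inductive typing :: "ty list \<Rightarrow> exp \<Rightarrow> ty \<Rightarrow> bool" where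
  t_var: "i < length \<Gamma> \<Longrightarrow> typing \<Gamma> (EVar i) (\<Gamma> ! i)"
| t_lam: "typing (\<tau>x # \<Gamma>) e \<tau>e \<Longrightarrow> typing \<Gamma> (ELam e) (TArr \<tau>x \<tau>e)"
| t_app: "typing \<Gamma> e1 (TArr \<tau>1 \<tau>2) \<Longrightarrow> typing \<Gamma> e2 \<tau>1 \<Longrightarrow> typing \<Gamma> (EApp e1 e2) \<tau>2"
| t_num: "typing \<Gamma> (ENum n) TNat"
| t_plus: "typing \<Gamma> e1 TNat \<Longrightarrow> typing \<Gamma> e2 TNat \<Longrightarrow> typing \<Gamma> (EPlus e1 e2) TNat"
| t_fix: "typing (\<tau> # \<Gamma>) e \<tau> \<Longrightarrow> typing \<Gamma> (EFix e) \<tau>"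
| t_filter: "ptyping \<Gamma> p \<tau>p \<Longrightarrow> typing \<Gamma> e \<tau>e \<Longrightarrow> typing \<Gamma> (EFilter (p, a, g) e) \<tau>e"
| t_res: "typing \<Gamma> e \<tau> \<Longrightarrow> typing \<Gamma> (ERes e a g l) \<tau>"

end

theory Submission
  imports Defs
begin

lemma typ_pat_of: "typing \<Gamma> e \<tau> \<Longrightarrow> ptyping \<Gamma> (pat_of (strip e)) \<tau>"
  by (induction rule: typing.induct) (auto intro: ptyping.intros)

lemma ins_nth_lt: "i < k \<Longrightarrow> k \<le> length \<Gamma> \<Longrightarrow> (take k \<Gamma> @ U # drop k \<Gamma>) ! i = \<Gamma> ! i"
  by (simp add: nth_append)

lemma ins_nth_ge: "k \<le> i \<Longrightarrow> i < length \<Gamma> \<Longrightarrow> (take k \<Gamma> @ U # drop k \<Gamma>) ! Suc i = \<Gamma> ! i"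
  by (simp add: nth_append min_def Suc_diff_le)

lemma pweaken: "ptyping \<Gamma> p \<tau> \<Longrightarrow> k \<le> length \<Gamma> \<Longrightarrow>
   ptyping (take k \<Gamma> @ U # drop k \<Gamma>) (plift k p) \<tau>"
proof (induction arbitrary: k rule: ptyping.induct)
  case (pt_var i \<Gamma>)
  then show ?case
    using ptyping.pt_var[of i "take k \<Gamma> @ U # drop k \<Gamma>"]
      ptyping.pt_var[of "Suc i" "take k \<Gamma> @ U # drop k \<Gamma>"]
    by (auto simp: ins_nth_lt ins_nth_ge)
next
  case (pt_lam \<tau>x \<Gamma> p \<tau>e)
  then show ?case using pt_lam.IH[of "Suc k"] by (auto intro: ptyping.intros)
next
  case (pt_fix \<tau> \<Gamma> p)
  then show ?case using pt_fix.IH[of "Suc k"] by (auto intro: ptyping.intros)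
qed (auto intro: ptyping.intros)

lemma weaken: "typing \<Gamma> e \<tau> \<Longrightarrow> k \<le> length \<Gamma> \<Longrightarrow>
   typing (take k \<Gamma> @ U # drop k \<Gamma>) (lift k e) \<tau>"
proof (induction arbitrary: k rule: typing.induct)
  case (t_var i \<Gamma>)
  then show ?case
    using typing.t_var[of i "take k \<Gamma> @ U # drop k \<Gamma>"]
      typing.t_var[of "Suc i" "take k \<Gamma> @ U # drop k \<Gamma>"]
    by (auto simp: ins_nth_lt ins_nth_ge)
next
  case (t_lam \<tau>x \<Gamma> e \<tau>e)
  then show ?case using t_lam.IH[of "Suc k"] by (auto intro: typing.intros)
next
  case (t_fix \<tau> \<Gamma> e)
  then show ?case using t_fix.IH[of "Suc k"] by (auto intro: typing.intros)
next
  case (t_filter \<Gamma> p \<tau>p e \<tau>e a g)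
  then show ?case using pweaken[OF t_filter(1), of k U] by (auto intro: typing.intros)
qed (auto intro: typing.intros)

lemma weaken0: "typing \<Gamma> e \<tau> \<Longrightarrow> typing (U # \<Gamma>) (lift 0 e) \<tau>"
  using weaken[of \<Gamma> e \<tau> 0 U] by simp

lemma del_nth_lt: "i < k \<Longrightarrow> k < length \<Gamma> \<Longrightarrow> (take k \<Gamma> @ drop (Suc k) \<Gamma>) ! i = \<Gamma> ! i"
  by (simp add: nth_append)

lemma del_nth_gt: "k < i \<Longrightarrow> i < length \<Gamma> \<Longrightarrow> (take k \<Gamma> @ drop (Suc k) \<Gamma>) ! (i - 1) = \<Gamma> ! i"
proof -
  assume a: "k < i" "i < length \<Gamma>"
  have l: "length (take k \<Gamma>) = k" using a by simp
  have "\<not> i - 1 < k" using a by simp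
  then have "(take k \<Gamma> @ drop (Suc k) \<Gamma>) ! (i - 1) = drop (Suc k) \<Gamma> ! (i - 1 - k)"
    using l by (simp only: nth_append) simp
  also have "\<dots> = \<Gamma> ! i" using a by simp
  finally show ?thesis .
qed

lemma psubst_typ: "ptyping \<Gamma> p \<tau> \<Longrightarrow> k < length \<Gamma> \<Longrightarrow> \<Gamma> ! k = T \<Longrightarrow>
   typing (take k \<Gamma> @ drop (Suc k) \<Gamma>) v T \<Longrightarrow>
   ptyping (take k \<Gamma> @ drop (Suc k) \<Gamma>) (psubst k v p) \<tau>"
proof (induction arbitrary: k v rule: ptyping.induct)
  case (pt_var i \<Gamma>)
  show ?case
  proof (cases "i = k")
    case True then show ?thesis using pt_var typ_pat_of by auto
  next
    case False
    show ?thesis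
    proof (cases "i < k")
      case True
      then show ?thesis using pt_var ptyping.pt_var[of i "take k \<Gamma> @ drop (Suc k) \<Gamma>"]
        by (simp add: del_nth_lt)
    next
      case c: False
      with False have ki: "k < i" by simp
      have eq: "(take k \<Gamma> @ drop (Suc k) \<Gamma>) ! (i - 1) = \<Gamma> ! i"
        using del_nth_gt[OF ki] pt_var by simp
      have "i - 1 < length (take k \<Gamma> @ drop (Suc k) \<Gamma>)" using ki pt_var by auto
      from ptyping.pt_var[OF this] show ?thesis using ki eq by simp
    qed
  qed
next
  case (pt_lam \<tau>x \<Gamma> p \<tau>e)
  then show ?case using pt_lam.IH[of "Suc k" "lift 0 v"] weaken0
    by (auto intro: ptyping.intros)
next
  case (pt_fix \<tau> \<Gamma> p)
  then show ?case using pt_fix.IH[of "Suc k" "lift 0 v"] weaken0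
    by (auto intro: ptyping.intros)
next
  case (pt_app \<Gamma> p1 \<tau>1 \<tau>2 p2)
  have "ptyping (take k \<Gamma> @ drop (Suc k) \<Gamma>) (psubst k v p1) (TArr \<tau>1 \<tau>2)"
    using pt_app.IH(1)[of k v] pt_app.prems by simp
  moreover have "ptyping (take k \<Gamma> @ drop (Suc k) \<Gamma>) (psubst k v p2) \<tau>1"
    using pt_app.IH(2)[of k v] pt_app.prems by simp
  ultimately show ?case by (simp add: ptyping.pt_app)
next
  case (pt_plus \<Gamma> p1 p2)
  then show ?case using pt_plus.IH[of k v] by (auto intro: ptyping.pt_plus)
qed (auto intro: ptyping.intros)

lemma subst_typ: "typing \<Gamma> e \<tau> \<Longrightarrow> k < length \<Gamma> \<Longrightarrow> \<Gamma> ! k = T \<Longrightarrow>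
   typing (take k \<Gamma> @ drop (Suc k) \<Gamma>) v T \<Longrightarrow>
   typing (take k \<Gamma> @ drop (Suc k) \<Gamma>) (subst k v e) \<tau>"
proof (induction arbitrary: k v rule: typing.induct)
  case (t_var i \<Gamma>)
  show ?case
  proof (cases "i = k")
    case True then show ?thesis using t_var by auto
  next
    case False
    show ?thesis
    proof (cases "i < k")
      case True
      then show ?thesis using t_var typing.t_var[of i "take k \<Gamma> @ drop (Suc k) \<Gamma>"]
        by (simp add: del_nth_lt)
    next
      case c: False
      with False have ki: "k < i" by simp
      have eq: "(take k \<Gamma> @ drop (Suc k) \<Gamma>) ! (i - 1) = \<Gamma> ! i"
        using del_nth_gt[OF ki] t_var by simp
      have "i - 1 < length (take k \<Gamma> @ drop (Suc k) \<Gamma>)" using ki t_var by auto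
      from typing.t_var[OF this] show ?thesis using ki eq by simp
    qed
  qed
next
  case (t_lam \<tau>x \<Gamma> e \<tau>e)
  then show ?case using t_lam.IH[of "Suc k" "lift 0 v"] weaken0
    by (auto intro: typing.intros)
next
  case (t_fix \<tau> \<Gamma> e)
  then show ?case using t_fix.IH[of "Suc k" "lift 0 v"] weaken0
    by (auto intro: typing.intros)
next
  case (t_filter \<Gamma> p \<tau>p e \<tau>e a g)
  have "ptyping (take k \<Gamma> @ drop (Suc k) \<Gamma>) (psubst k v p) \<tau>p"
    using psubst_typ[OF t_filter(1)] t_filter.prems by blast
  then show ?case using t_filter.IH[of k v] t_filter.prems by (auto intro: typing.t_filter)
next
  case (t_app \<Gamma> e1 \<tau>1 \<tau>2 e2)
  have "typing (take k \<Gamma> @ drop (Suc k) \<Gamma>) (subst k v e1) (TArr \<tau>1 \<tau>2)"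
    using t_app.IH(1)[of k v] t_app.prems by simp
  moreover have "typing (take k \<Gamma> @ drop (Suc k) \<Gamma>) (subst k v e2) \<tau>1"
    using t_app.IH(2)[of k v] t_app.prems by simp
  ultimately show ?case by (simp add: typing.t_app)
qed (auto intro: typing.intros)

lemma subst0_typ: "typing (T # \<Gamma>) e \<tau> \<Longrightarrow> typing \<Gamma> v T \<Longrightarrow> typing \<Gamma> (subst 0 v e) \<tau>"
  using subst_typ[of "T # \<Gamma>" e \<tau> 0 T v] by simp

lemma instr_typ: "instr p a g l e e' \<Longrightarrow> typing \<Gamma> e \<tau> \<Longrightarrow> typing \<Gamma> e' \<tau>"
proof (induction arbitrary: \<Gamma> \<tau> rule: instr.induct)
  case (i_res p a g l e0 e a' g' l')
  then show ?case by (auto elim: typing.cases intro: typing.intros)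
next
  case (i_filter p a g l e0 e p' a' g' e')
  from i_filter.prems obtain \<tau>p where "ptyping \<Gamma> p' \<tau>p" "typing \<Gamma> e0 \<tau>"
    by (cases rule: typing.cases) auto
  then show ?case using i_filter.IH by (auto intro: typing.intros)
next
  case (i_app_m p a g l e1 e1' e2 e2')
  from i_app_m.prems obtain \<tau>1 where "typing \<Gamma> e1 (TArr \<tau>1 \<tau>)" "typing \<Gamma> e2 \<tau>1"
    by (cases rule: typing.cases) auto
  then show ?case using i_app_m.IH by (auto intro!: typing.t_res typing.t_app)
next
  case (i_app_n p a g l e1 e1' e2 e2')
  from i_app_n.prems obtain \<tau>1 where "typing \<Gamma> e1 (TArr \<tau>1 \<tau>)" "typing \<Gamma> e2 \<tau>1"
    by (cases rule: typing.cases) auto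
  then show ?case using i_app_n.IH by (auto intro!: typing.t_app)
next
  case (i_plus_m p a g l e1 e1' e2 e2')
  then show ?case by (auto elim!: typing.cases[of _ "EPlus _ _"] intro!: typing.t_res typing.t_plus)
next
  case (i_plus_n p a g l e1 e1' e2 e2')
  then show ?case by (auto elim!: typing.cases[of _ "EPlus _ _"] intro: typing.intros)
qed auto

lemma decay_exp_typ: "typing \<Gamma> e \<tau> \<Longrightarrow> typing \<Gamma> (decay_exp e) \<tau>"
  by (induction rule: typing.induct) (auto intro: typing.intros)

lemma decomp_typ: "decomp e E e0 \<Longrightarrow> typing \<Gamma> e \<tau> \<Longrightarrow>
  \<exists>\<tau>0. typing \<Gamma> e0 \<tau>0 \<and> (\<forall>e'. typing \<Gamma> e' \<tau>0 \<longrightarrow> typing \<Gamma> (plug (decay E) e') \<tau>)"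
proof (induction arbitrary: \<tau> rule: decomp.induct)
  case (d_res e E e0 a g l)
  from d_res.prems have "typing \<Gamma> e \<tau>" by (cases rule: typing.cases) auto
  then obtain \<tau>0 where "typing \<Gamma> e0 \<tau>0" "\<forall>e'. typing \<Gamma> e' \<tau>0 \<longrightarrow> typing \<Gamma> (plug (decay E) e') \<tau>"
    using d_res.IH by blast
  then show ?case by (auto intro!: typing.t_res)
next
  case (d_filter e E e0 f)
  from d_filter.prems obtain \<tau>p where "ptyping \<Gamma> (fst f) \<tau>p" "typing \<Gamma> e \<tau>"
    by (cases rule: typing.cases) auto
  then obtain \<tau>0 where "typing \<Gamma> e0 \<tau>0" "\<forall>e'. typing \<Gamma> e' \<tau>0 \<longrightarrow> typing \<Gamma> (plug (decay E) e') \<tau>"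
    using d_filter.IH by blast
  then show ?case using \<open>ptyping \<Gamma> (fst f) \<tau>p\<close>
    by (cases f) (auto intro!: typing.t_filter)
next
  case (d_appL e1 E e0 e2)
  then show ?case
    by (auto elim!: typing.cases[of _ "EApp _ _"] intro: typing.intros decay_exp_typ)
       (meson decay_exp_typ typing.t_app)
next
  case (d_appR e1 e2 E e0)
  then show ?case
    by (auto elim!: typing.cases[of _ "EApp _ _"] intro: typing.intros decay_exp_typ)
       (meson decay_exp_typ typing.t_app)
next
  case (d_plusL e1 E e0 e2)
  from d_plusL.prems have t: "\<tau> = TNat" "typing \<Gamma> e1 TNat" "typing \<Gamma> e2 TNat"
    by (cases rule: typing.cases; auto)+
  then obtain \<tau>0 where "typing \<Gamma> e0 \<tau>0" "\<forall>e'. typing \<Gamma> e' \<tau>0 \<longrightarrow> typing \<Gamma> (plug (decay E) e') TNat"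
    using d_plusL.IH by blast
  then show ?case using t by (auto intro!: typing.t_plus decay_exp_typ)
next
  case (d_plusR e1 e2 E e0)
  from d_plusR.prems have t: "\<tau> = TNat" "typing \<Gamma> e1 TNat" "typing \<Gamma> e2 TNat"
    by (cases rule: typing.cases; auto)+
  then obtain \<tau>0 where "typing \<Gamma> e0 \<tau>0" "\<forall>e'. typing \<Gamma> e' \<tau>0 \<longrightarrow> typing \<Gamma> (plug (decay E) e') TNat"
    using d_plusR.IH by blast
  then show ?case using t by (auto intro!: typing.t_plus decay_exp_typ)
qed auto

lemma instruction_typ: "instruction e e' \<Longrightarrow> typing \<Gamma> e \<tau> \<Longrightarrow> typing \<Gamma> e' \<tau>"
proof (induction rule: instruction.induct)
  case (t_beta v e1)
  then show ?case
    by (auto elim!: typing.cases[of _ "EApp _ _"] typing.cases[of _ "ELam _"] intro: subst0_typ)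
next
  case (t_fix e)
  then show ?case
    by (auto elim: typing.cases[of _ "EFix _"] intro: subst0_typ)
next
  case (t_plus n1 n2)
  then show ?case by (auto elim!: typing.cases[of _ "EPlus _ _"] intro: typing.intros)
next
  case (t_res v a g l)
  then show ?case by (auto elim: typing.cases)
next
  case (t_filter v f)
  then show ?case by (auto elim: typing.cases)
qed

lemma one_step: "instr PAnyE Step GOne 0 e ei \<Longrightarrow> decomp ei E0 e0 \<Longrightarrow> instruction e0 et \<Longrightarrow>
   typing \<Gamma> e \<tau> \<Longrightarrow> typing \<Gamma> (plug (decay E0) et) \<tau>"
  using instr_typ decomp_typ instruction_typ by metis

theorem theorem1:
  fixes \<Gamma> :: "ty list" and e e' :: exp and \<tau> :: ty and n :: nat
  assumes "typing \<Gamma> e \<tau>" and "fstep e n e'"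
  shows "typing \<Gamma> e' \<tau>"
  using assms(2,1)
  by (induction rule: fstep.induct) (auto dest: one_step)

end
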